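(* For mv-ATL$_\to$, memory is irrelevant, i.e., its semantics can be equivalently given by memoryless strategies.
   Context: Let $\mathcal{L}=(L,\leq)$ be a finite distributive lattice with meet $\sqcap$, join $\sqcup$, least element $\bot$ and greatest element $\top$; for a family of elements, $\inf$ denotes its greatest lower bound (lattice meet) and $\bigsqcup$ its least upper bound (lattice join). A multi-valued concurrent game structure (mv-CGS) over $\mathcal{L}$ is a concurrent game structure $\langle \mathrm{Agt},Q,Act,d,t,AP,V,(L,\leq,\sigma)\rangle$ whose valuation $V:AP\times Q\to L$ assigns lattice values to atomic propositions at states (perfect information). mv-ATL$_\to$ has formulas $\varphi::=c\mid p\mid\varphi\wedge\varphi\mid\varphi\vee\varphi\mid\varphi\to\varphi\mid\langle\!\langle A\rangle\!\rangle X\varphi\mid\langle\!\langle A\rangle\!\rangle\varphi U\varphi\mid\langle\!\langle A\rangle\!\rangle\varphi W\varphi$ (and the dual $[\![A]\!]$ forms), interpreted with $\wedge,\vee$ as $\sqcap,\sqcup$, $[\![\langle\!\langle A\rangle\!\rangle\gamma]\!]_{M,q}=\bigsqcup_{s_A\in\Sigma_A}\inf_{\lambda\in out(q,s_A)}[\![\gamma]\!]_{M,\lambda}$, $[\![[\![A]\!]\gamma]\!]_{M,q}=\inf_{s_A\in\Sigma_A}\bigsqcup_{\lambda\in out(q,s_A)}[\![\gamma]\!]_{M,\lambda}$, $[\![\varphi_1 U\varphi_2]\!]_{M,\lambda}=\bigsqcup_{i\ge 0}\inf_{0\le j<i}\{[\![\varphi_2]\!]_{M,\lambda[i]}\sqcap[\![\varphi_1]\!]_{M,\lambda[j]}\}$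 (analogously for $X$, $W$), and $[\![\varphi_1\to\varphi_2]\!]_{M,q}=\top$ if $[\![\varphi_1]\!]_{M,q}\le[\![\varphi_2]\!]_{M,q}$ and $\bot$ otherwise. $\Sigma_A$ is either the set of perfect recall strategies ($s_a:Q^+\to Act$) or the set of memoryless strategies ($s_a:Q\to Act$), with $s_a$ choosing actions available to $a$. The claim is that both choices of $\Sigma_A$ give the same valuation. This follows from a reduction of multi-valued model checking to 2-valued model checking (via threshold functions on join-irreducible elements, plus fresh propositions for implication subformulas) that is correct independently of the strategy type, together with the fact that perfect recall and memoryless semantics coincide in 2-valued ATL. *)

theory Defs
  imports Main "HOL-Library.Finite_Lattice"
begin

record ('a, 's, 'act, 'p, 'l) mvcgs =
  avail :: "'a \<Rightarrow> 's \<Rightarrow> 'act set"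
  trans :: "'s \<Rightarrow> ('a \<Rightarrow> 'act) \<Rightarrow> 's"
  val   :: "'p \<Rightarrow> 's \<Rightarrow> 'l"

definition wf_mvcgs :: "('a, 's, 'act, 'p, 'l) mvcgs \<Rightarrow> bool" where
  "wf_mvcgs M \<longleftrightarrow> (\<forall>a q. avail M a q \<noteq> {})"

datatype ('a, 'p, 'l) mvatl =
    Const 'l
  | Prop 'p
  | And "('a, 'p, 'l) mvatl" "('a, 'p, 'l) mvatl"
  | Or  "('a, 'p, 'l) mvatl" "('a, 'p, 'l) mvatl"
  | Imp "('a, 'p, 'l) mvatl" "('a, 'p, 'l) mvatl"
  | CoopX "'a set" "('a, 'p, 'l) mvatl"
  | CoopU "'a set" "('a, 'p, 'l) mvatl" "('a, 'p, 'l) mvatl"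
  | CoopW "'a set" "('a, 'p, 'l) mvatl" "('a, 'p, 'l) mvatl"
  | DualX "'a set" "('a, 'p, 'l) mvatl"
  | DualU "'a set" "('a, 'p, 'l) mvatl" "('a, 'p, 'l) mvatl"
  | DualW "'a set" "('a, 'p, 'l) mvatl" "('a, 'p, 'l) mvatl"

text \<open>Strategy profiles of a coalition are represented uniformly as functions
from agents and nonempty histories (state lists, last element = current state) to actions.\<close>

definition pr_strats :: "('a, 's, 'act, 'p, 'l) mvcgs \<Rightarrow> 'a set \<Rightarrow> ('a \<Rightarrow> 's list \<Rightarrow> 'act) set" where
  "pr_strats M A = {s. \<forall>a\<in>A. \<forall>h. h \<noteq> [] \<longrightarrow> s a h \<in> avail M a (last h)}"

definition ml_strats :: "('a, 's, 'act, 'p, 'l) mvcgs \<Rightarrow> 'a set \<Rightarrow> ('a \<Rightarrow> 's list \<Rightarrow> 'act) set" where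
  "ml_strats M A = {(\<lambda>a h. f a (last h)) | f. \<forall>a\<in>A. \<forall>q. f a q \<in> avail M a q}"

definition strats :: "('a, 's, 'act, 'p, 'l) mvcgs \<Rightarrow> bool \<Rightarrow> 'a set \<Rightarrow> ('a \<Rightarrow> 's list \<Rightarrow> 'act) set" where
  "strats M perfect_recall A = (if perfect_recall then pr_strats M A else ml_strats M A)"

definition outcomes :: "('a, 's, 'act, 'p, 'l) mvcgs \<Rightarrow> 'a set \<Rightarrow> 's \<Rightarrow> ('a \<Rightarrow> 's list \<Rightarrow> 'act) \<Rightarrow> (nat \<Rightarrow> 's) set" where
  "outcomes M A q s = {\<rho>. \<rho> 0 = q \<and>
     (\<forall>i. \<exists>\<alpha>. (\<forall>a. \<alpha> a \<in> avail M a (\<rho> i)) \<and>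
               (\<forall>a\<in>A. \<alpha> a = s a (map \<rho> [0..<Suc i])) \<and>
               \<rho> (Suc i) = trans M (\<rho> i) \<alpha>)}"

definition path_next :: "('s \<Rightarrow> 'l::complete_lattice) \<Rightarrow> (nat \<Rightarrow> 's) \<Rightarrow> 'l" where
  "path_next f \<rho> = f (\<rho> 1)"

definition path_until :: "('s \<Rightarrow> 'l::complete_lattice) \<Rightarrow> ('s \<Rightarrow> 'l) \<Rightarrow> (nat \<Rightarrow> 's) \<Rightarrow> 'l" where
  "path_until f1 f2 \<rho> = (SUP i. inf (f2 (\<rho> i)) (INF j\<in>{..<i}. f1 (\<rho> j)))"

definition path_weak :: "('s \<Rightarrow> 'l::complete_lattice) \<Rightarrow> ('s \<Rightarrow> 'l) \<Rightarrow> (nat \<Rightarrow> 's) \<Rightarrow> 'l" where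
  "path_weak f1 f2 \<rho> = sup (path_until f1 f2 \<rho>) (INF i. f1 (\<rho> i))"

definition coop :: "('a, 's, 'act, 'p, 'l::complete_lattice) mvcgs \<Rightarrow> bool \<Rightarrow> 'a set
                    \<Rightarrow> ((nat \<Rightarrow> 's) \<Rightarrow> 'l) \<Rightarrow> 's \<Rightarrow> 'l" where
  "coop M pr A \<gamma> q = (SUP s\<in>strats M pr A. INF \<rho>\<in>outcomes M A q s. \<gamma> \<rho>)"

definition dual :: "('a, 's, 'act, 'p, 'l::complete_lattice) mvcgs \<Rightarrow> bool \<Rightarrow> 'a set
                    \<Rightarrow> ((nat \<Rightarrow> 's) \<Rightarrow> 'l) \<Rightarrow> 's \<Rightarrow> 'l" where
  "dual M pr A \<gamma> q = (INF s\<in>strats M pr A. SUP \<rho>\<in>outcomes M A q s. \<gamma> \<rho>)"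

primrec sem :: "('a, 's, 'act, 'p, 'l::finite_distrib_lattice_complete) mvcgs \<Rightarrow> bool
                 \<Rightarrow> ('a, 'p, 'l) mvatl \<Rightarrow> 's \<Rightarrow> 'l" where
  "sem M pr (Const c) q = c"
| "sem M pr (Prop p) q = val M p q"
| "sem M pr (And \<phi> \<psi>) q = inf (sem M pr \<phi> q) (sem M pr \<psi> q)"
| "sem M pr (Or \<phi> \<psi>) q = sup (sem M pr \<phi> q) (sem M pr \<psi> q)"
| "sem M pr (Imp \<phi> \<psi>) q = (if sem M pr \<phi> q \<le> sem M pr \<psi> q then top else bot)"
| "sem M pr (CoopX A \<phi>) q = coop M pr A (path_next (sem M pr \<phi>)) q"
| "sem M pr (CoopU A \<phi> \<psi>) q = coop M pr A (path_until (sem M pr \<phi>) (sem M pr \<psi>)) q"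
| "sem M pr (CoopW A \<phi> \<psi>) q = coop M pr A (path_weak (sem M pr \<phi>) (sem M pr \<psi>)) q"
| "sem M pr (DualX A \<phi>) q = dual M pr A (path_next (sem M pr \<phi>)) q"
| "sem M pr (DualU A \<phi> \<psi>) q = dual M pr A (path_until (sem M pr \<phi>) (sem M pr \<psi>)) q"
| "sem M pr (DualW A \<phi> \<psi>) q = dual M pr A (path_weak (sem M pr \<phi>) (sem M pr \<psi>)) q"

end

theory Submission
  imports Defs
begin

definition jp :: "'l::finite_distrib_lattice_complete \<Rightarrow> bool" where
  "jp j \<longleftrightarrow> j \<noteq> bot \<and> (\<forall>a b. j \<le> sup a b \<longrightarrow> j \<le> a \<or> j \<le> b)"

lemma jp_Sup_fin:
  fixes j :: "'l::finite_distrib_lattice_complete"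
  assumes "finite S" "jp j" "j \<le> Sup S" shows "\<exists>s\<in>S. j \<le> s"
  using assms
proof (induction S rule: finite_induct)
  case empty thus ?case by (simp add: jp_def bot_unique)
next
  case (insert x F)
  then have "j \<le> sup x (Sup F)" by simp
  then have "j \<le> x \<or> j \<le> Sup F" using insert.prems(1) by (simp add: jp_def)
  thus ?case using insert by auto
qed

lemma jp_SUP:
  fixes j :: "'l::finite_distrib_lattice_complete"
  assumes "jp j" "j \<le> (SUP x\<in>X. g x)" shows "\<exists>x\<in>X. j \<le> g x"
  using jp_Sup_fin[of "g ` X" j] assms by auto

lemma Sup_jp: "(x::'l::finite_distrib_lattice_complete) = Sup {j. jp j \<and> j \<le> x}"
proof (induction x rule: measure_induct_rule[where f="\<lambda>x. card {y. y < x}"])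
  case (less x)
  show ?case
  proof (cases "x = bot")
    case True
    then have "{j. jp j \<and> j \<le> x} = {}" unfolding jp_def using bot.extremum_unique by blast
    then show ?thesis using True by (metis Sup_empty)
  next
    case nb: False
    show ?thesis
    proof (cases "jp x")
      case True
      then have "x \<le> Sup {j. jp j \<and> j \<le> x}" by (intro Sup_upper) auto
      moreover have "Sup {j. jp j \<and> j \<le> x} \<le> x" by (intro Sup_least) auto
      ultimately show ?thesis by (rule antisym)
    next
      case False
      then obtain a b where ab: "x \<le> sup a b" "\<not> x \<le> a" "\<not> x \<le> b" using nb by (auto simp: jp_def)
      have xe: "x = sup (inf x a) (inf x b)"
        using ab(1) by (metis inf.absorb1 inf_sup_distrib1)
      have lt: "inf x c < x" if "\<not> x \<le> c" for c
        using that by (metis inf.absorb_iff1 inf_le1 order.not_eq_order_implies_strict inf.commute)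
      have mono: "inf x c \<le> Sup {j. jp j \<and> j \<le> x}" if "\<not> x \<le> c" for c
      proof -
        have "card {y. y < inf x c} < card {y. y < x}"
          apply (rule psubset_card_mono)
           apply simp
          using lt[OF that] by auto
        then have "inf x c = Sup {j. jp j \<and> j \<le> inf x c}" using less by blast
        also have "\<dots> \<le> Sup {j. jp j \<and> j \<le> x}"
          by (rule Sup_subset_mono) (auto intro: order_trans)
        finally show ?thesis .
      qed
      have "x \<le> Sup {j. jp j \<and> j \<le> x}"
        using xe mono[OF ab(2)] mono[OF ab(3)] by (metis sup_least)
      moreover have "Sup {j. jp j \<and> j \<le> x} \<le> x" by (intro Sup_least) auto
      ultimately show ?thesis by (rule antisym)
    qed
  qed
qed

lemma eq_jp:
  fixes x y :: "'l::finite_distrib_lattice_complete"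
  assumes "\<And>j. jp j \<Longrightarrow> (j \<le> x \<longleftrightarrow> j \<le> y)" shows "x = y"
proof -
  have "{j. jp j \<and> j \<le> x} = {j. jp j \<and> j \<le> y}" using assms by auto
  then show ?thesis using Sup_jp[of x] Sup_jp[of y] by simp
qed


section \<open>Games\<close>

definition win :: "('a, 's, 'act, 'p, 'l) mvcgs \<Rightarrow> 'a set \<Rightarrow> ('a \<Rightarrow> 's list \<Rightarrow> 'act) \<Rightarrow> 's \<Rightarrow> ((nat \<Rightarrow> 's) \<Rightarrow> bool) \<Rightarrow> bool" where
  "win M A t q Ob \<longleftrightarrow> (\<forall>\<rho>\<in>outcomes M A q t. Ob \<rho>)"

definition MLP :: "('a, 's, 'act, 'p, 'l) mvcgs \<Rightarrow> 'a set \<Rightarrow> ((nat \<Rightarrow> 's) \<Rightarrow> bool) \<Rightarrow> bool" where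
  "MLP M A Ob \<longleftrightarrow> (\<forall>q. (\<exists>t\<in>pr_strats M A. win M A t q Ob) \<longrightarrow> (\<exists>t\<in>ml_strats M A. win M A t q Ob))"

definition untl :: "('s \<Rightarrow> bool) \<Rightarrow> ('s \<Rightarrow> bool) \<Rightarrow> (nat \<Rightarrow> 's) \<Rightarrow> bool" where
  "untl P1 P2 \<rho> \<longleftrightarrow> (\<exists>i. P2 (\<rho> i) \<and> (\<forall>k<i. P1 (\<rho> k)))"

definition wkun :: "('s \<Rightarrow> bool) \<Rightarrow> ('s \<Rightarrow> bool) \<Rightarrow> (nat \<Rightarrow> 's) \<Rightarrow> bool" where
  "wkun P1 P2 \<rho> \<longleftrightarrow> untl P1 P2 \<rho> \<or> (\<forall>i. P1 (\<rho> i))"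

definition nx :: "('s \<Rightarrow> bool) \<Rightarrow> (nat \<Rightarrow> 's) \<Rightarrow> bool" where
  "nx P \<rho> \<longleftrightarrow> P (\<rho> 1)"

definition resid :: "('a \<Rightarrow> 's list \<Rightarrow> 'act) \<Rightarrow> 's \<Rightarrow> ('a \<Rightarrow> 's list \<Rightarrow> 'act)" where
  "resid t q = (\<lambda>a h. t a (q # h))"

lemma ml_sub_pr: "ml_strats M A \<subseteq> pr_strats M A"
  unfolding ml_strats_def pr_strats_def by auto

lemma hist_last: "last (map \<rho> [0..<Suc i]) = \<rho> i"
  by simp

lemma outcomes_ml: "\<rho> \<in> outcomes M A q (\<lambda>a h. f a (last h)) \<longleftrightarrow> \<rho> 0 = q \<and>
   (\<forall>i. \<exists>\<alpha>. (\<forall>a. \<alpha> a \<in> avail M a (\<rho> i)) \<and> (\<forall>a\<in>A. \<alpha> a = f a (\<rho> i)) \<and> \<rho> (Suc i) = trans M (\<rho> i) \<alpha>)"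
  unfolding outcomes_def by (simp only: hist_last mem_Collect_eq)

lemma resid_pr: "t \<in> pr_strats M A \<Longrightarrow> resid t q \<in> pr_strats M A"
  unfolding pr_strats_def resid_def mem_Collect_eq by (metis last_ConsR list.distinct(1))

lemma map_cons_upt: "map (case_nat q \<rho>) [0..<Suc n] = q # map \<rho> [0..<n]"
  unfolding map_upt_Suc by simp

lemma outcomes_cons:
  assumes "\<rho>' \<in> outcomes M A (trans M q \<alpha>) (resid t q)" "\<forall>a. \<alpha> a \<in> avail M a q" "\<forall>a\<in>A. \<alpha> a = t a [q]"
  shows "case_nat q \<rho>' \<in> outcomes M A q t"
  unfolding outcomes_def mem_Collect_eq
proof (intro conjI allI)
  show "case_nat q \<rho>' 0 = q" by simp
  fix i
  show "\<exists>\<alpha>. (\<forall>a. \<alpha> a \<in> avail M a (case_nat q \<rho>' i)) \<and>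
              (\<forall>a\<in>A. \<alpha> a = t a (map (case_nat q \<rho>') [0..<Suc i])) \<and>
              case_nat q \<rho>' (Suc i) = trans M (case_nat q \<rho>' i) \<alpha>"
  proof (cases i)
    case 0
    have "\<rho>' 0 = trans M q \<alpha>" using assms(1) unfolding outcomes_def by blast
    then show ?thesis using assms 0 by (intro exI[of _ \<alpha>]) auto
  next
    case (Suc k)
    from assms(1) obtain \<beta> where b: "\<forall>a. \<beta> a \<in> avail M a (\<rho>' k)"
      "\<forall>a\<in>A. \<beta> a = resid t q a (map \<rho>' [0..<Suc k])" "\<rho>' (Suc k) = trans M (\<rho>' k) \<beta>"
      unfolding outcomes_def by blast
    have e: "map (case_nat q \<rho>') [0..<Suc (Suc k)] = q # map \<rho>' [0..<Suc k]" by (rule map_cons_upt)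
    show ?thesis using b unfolding Suc e resid_def by (intro exI[of _ \<beta>]) auto
  qed
qed

lemma path_exists:
  assumes "R q0 t0"
    and step: "\<And>q t. R q t \<Longrightarrow> \<exists>\<alpha>. (\<forall>a. \<alpha> a \<in> avail M a q) \<and> (\<forall>a\<in>A. \<alpha> a = t a [q]) \<and> R (trans M q \<alpha>) (resid t q)"
  shows "\<exists>\<rho>\<in>outcomes M A q0 t0. \<forall>i. \<exists>t. R (\<rho> i) t"
proof -
  define G where "G q t \<alpha> \<longleftrightarrow> (\<forall>a. \<alpha> a \<in> avail M a q) \<and> (\<forall>a\<in>A. \<alpha> a = t a [q]) \<and> R (trans M q \<alpha>) (resid t q)" for q t \<alpha>
  define nxt where "nxt = (\<lambda>(q,t). (trans M q (SOME \<alpha>. G q t \<alpha>), resid t q))"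
  define sq where "sq n = (nxt ^^ n) (q0, t0)" for n
  define \<rho> where "\<rho> i = fst (sq i)" for i
  have sqS: "sq (Suc n) = nxt (sq n)" for n by (simp add: sq_def)
  have inv: "R (fst (sq n)) (snd (sq n)) \<and> snd (sq n) = (\<lambda>a h. t0 a (map \<rho> [0..<n] @ h))" for n
  proof (induction n)
    case 0
    then show ?case using assms(1) by (simp add: sq_def)
  next
    case (Suc n)
    obtain q t where qt: "sq n = (q, t)" by fastforce
    have R: "R q t" and tt: "t = (\<lambda>a h. t0 a (map \<rho> [0..<n] @ h))" using Suc qt by auto
    have G: "G q t (SOME \<alpha>. G q t \<alpha>)" using step[OF R] unfolding G_def[symmetric] by (rule someI_ex)
    have "\<rho> n = q" using qt by (simp add: \<rho>_def)
    then show ?case using G tt qt sqS[of n]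
      by (auto simp: nxt_def G_def resid_def)
  qed
  have "\<rho> \<in> outcomes M A q0 t0"
    unfolding outcomes_def mem_Collect_eq
  proof (intro conjI allI)
    show "\<rho> 0 = q0" by (simp add: \<rho>_def sq_def)
    fix i
    obtain q t where qt: "sq i = (q, t)" by fastforce
    have R: "R q t" and tt: "t = (\<lambda>a h. t0 a (map \<rho> [0..<i] @ h))" using inv[of i] qt by auto
    have G: "G q t (SOME \<alpha>. G q t \<alpha>)" using step[OF R] unfolding G_def[symmetric] by (rule someI_ex)
    have q: "\<rho> i = q" using qt by (simp add: \<rho>_def)
    have "\<rho> (Suc i) = trans M q (SOME \<alpha>. G q t \<alpha>)" using qt sqS[of i] by (simp add: \<rho>_def nxt_def)
    then show "\<exists>\<alpha>. (\<forall>a. \<alpha> a \<in> avail M a (\<rho> i)) \<and> (\<forall>a\<in>A. \<alpha> a = t0 a (map \<rho> [0..<Suc i])) \<and>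
          \<rho> (Suc i) = trans M (\<rho> i) \<alpha>"
      using G q tt by (intro exI[of _ "SOME \<alpha>. G q t \<alpha>"]) (auto simp: G_def)
  qed
  moreover have "\<forall>i. \<exists>t. R (\<rho> i) t" using inv unfolding \<rho>_def by blast
  ultimately show ?thesis by blast
qed

lemma outcomes_nonempty:
  assumes wf: "wf_mvcgs M" and t: "t \<in> pr_strats M A"
  shows "\<exists>\<rho>. \<rho> \<in> outcomes M A q t"
proof -
  have step: "\<exists>\<alpha>. (\<forall>a. \<alpha> a \<in> avail M a q) \<and> (\<forall>a\<in>A. \<alpha> a = t a [q]) \<and> resid t q \<in> pr_strats M A"
    if t: "t \<in> pr_strats M A" for q t
  proof -
    define \<alpha> where "\<alpha> = (\<lambda>a. if a \<in> A then t a [q] else SOME x. x \<in> avail M a q)"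
    have av: "\<alpha> a \<in> avail M a q" for a
    proof (cases "a \<in> A")
      case True
      then have "t a [q] \<in> avail M a (last [q])" using t unfolding pr_strats_def by blast
      then show ?thesis using True unfolding \<alpha>_def by simp
    next
      case False
      have "avail M a q \<noteq> {}" using wf unfolding wf_mvcgs_def by blast
      then have "(SOME x. x \<in> avail M a q) \<in> avail M a q" by (simp add: some_in_eq)
      then show ?thesis using False unfolding \<alpha>_def by simp
    qed
    have ag: "\<forall>a\<in>A. \<alpha> a = t a [q]" unfolding \<alpha>_def by simp
    show ?thesis using av ag resid_pr[OF t] by blast
  qed
  show ?thesis using path_exists[where R="\<lambda>q t. t \<in> pr_strats M A", OF t step] by blast
qed

lemma win_step:
  assumes "win M A t q Ob" "\<forall>a. \<alpha> a \<in> avail M a q" "\<forall>a\<in>A. \<alpha> a = t a [q]"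
  shows "win M A (resid t q) (trans M q \<alpha>) (\<lambda>\<rho>'. Ob (case_nat q \<rho>'))"
  unfolding win_def
proof
  fix \<rho>' assume "\<rho>' \<in> outcomes M A (trans M q \<alpha>) (resid t q)"
  then have "case_nat q \<rho>' \<in> outcomes M A q t" using assms(2,3) by (rule outcomes_cons)
  then show "Ob (case_nat q \<rho>')" using assms(1) unfolding win_def by blast
qed

lemma case_nat_split: "case_nat (\<rho> 0) (\<lambda>i. \<rho> (Suc i)) = \<rho>"
  by (rule ext) (simp split: nat.split)

lemma untl_cons: "untl P1 P2 (case_nat q \<rho>) \<longleftrightarrow> P2 q \<or> (P1 q \<and> untl P1 P2 \<rho>)"
proof
  assume "untl P1 P2 (case_nat q \<rho>)"
  then obtain i where i: "P2 (case_nat q \<rho> i)" "\<forall>k<i. P1 (case_nat q \<rho> k)" unfolding untl_def by blast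
  show "P2 q \<or> (P1 q \<and> untl P1 P2 \<rho>)"
  proof (cases i)
    case 0 then show ?thesis using i by simp
  next
    case (Suc m)
    have "P1 q" using i(2) Suc by (metis old.nat.simps(4) zero_less_Suc)
    moreover have "untl P1 P2 \<rho>" unfolding untl_def
      using i Suc by (intro exI[of _ m]) (auto dest: spec[of _ "Suc _"])
    ultimately show ?thesis by blast
  qed
next
  assume "P2 q \<or> (P1 q \<and> untl P1 P2 \<rho>)"
  then show "untl P1 P2 (case_nat q \<rho>)"
  proof
    assume "P2 q" then show ?thesis unfolding untl_def by (intro exI[of _ 0]) simp
  next
    assume "P1 q \<and> untl P1 P2 \<rho>"
    then obtain i where i: "P1 q" "P2 (\<rho> i)" "\<forall>k<i. P1 (\<rho> k)" unfolding untl_def by blast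
    show ?thesis unfolding untl_def
    proof (intro exI[of _ "Suc i"] conjI allI impI)
      show "P2 (case_nat q \<rho> (Suc i))" using i by simp
      fix k assume "k < Suc i" then show "P1 (case_nat q \<rho> k)" using i by (cases k) auto
    qed
  qed
qed

lemma all_cons: "(\<forall>i. P (case_nat q \<rho> i)) \<longleftrightarrow> P q \<and> (\<forall>i. P (\<rho> i))"
  by (metis old.nat.simps(4) old.nat.simps(5) nat.exhaust)

lemma wkun_cons: "wkun P1 P2 (case_nat q \<rho>) \<longleftrightarrow> P2 q \<or> (P1 q \<and> wkun P1 P2 \<rho>)"
  unfolding wkun_def untl_cons all_cons[of P1] by blast


lemma MLnx:
  assumes wf: "wf_mvcgs M"
  shows "MLP M A (nx P)"
  unfolding MLP_def
proof (intro allI impI)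
  fix q assume "\<exists>t\<in>pr_strats M A. win M A t q (nx P)"
  then obtain t where t: "t \<in> pr_strats M A" and w: "win M A t q (nx P)" by blast
  define f where "f = (\<lambda>a q'. t a [q'])"
  have fml: "(\<lambda>a h. f a (last h)) \<in> ml_strats M A"
    unfolding ml_strats_def mem_Collect_eq
  proof (intro exI conjI)
    show "\<forall>a\<in>A. \<forall>q. f a q \<in> avail M a q"
    proof (intro ballI allI)
      fix a q' assume a: "a \<in> A"
      have "t a [q'] \<in> avail M a (last [q'])" using t a unfolding pr_strats_def by blast
      then show "f a q' \<in> avail M a q'" by (simp add: f_def)
    qed
  qed simp
  have "win M A (\<lambda>a h. f a (last h)) q (nx P)"
    unfolding win_def
  proof
    fix \<rho> assume "\<rho> \<in> outcomes M A q (\<lambda>a h. f a (last h))"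
    then have o: "\<rho> 0 = q" "\<forall>i. \<exists>\<alpha>. (\<forall>a. \<alpha> a \<in> avail M a (\<rho> i)) \<and> (\<forall>a\<in>A. \<alpha> a = f a (\<rho> i)) \<and> \<rho> (Suc i) = trans M (\<rho> i) \<alpha>"
      unfolding outcomes_ml by blast+
    from o(2)[rule_format, of 0] obtain \<alpha> where \<alpha>: "\<forall>a. \<alpha> a \<in> avail M a q" "\<forall>a\<in>A. \<alpha> a = t a [q]"
       "\<rho> (Suc 0) = trans M q \<alpha>"
      unfolding o(1) f_def by blast
    obtain \<rho>' where r': "\<rho>' \<in> outcomes M A (trans M q \<alpha>) (resid t q)"
      using outcomes_nonempty[OF wf resid_pr[OF t]] by blast
    have r'0: "\<rho>' 0 = trans M q \<alpha>" using r' unfolding outcomes_def by blast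
    have "win M A (resid t q) (trans M q \<alpha>) (\<lambda>\<rho>'. nx P (case_nat q \<rho>'))"
      by (rule win_step[OF w \<alpha>(1,2)])
    then have "P (\<rho>' 0)" using r' unfolding win_def nx_def by simp
    then show "nx P \<rho>" using r'0 \<alpha>(3) unfolding nx_def by simp
  qed
  then show "\<exists>t\<in>ml_strats M A. win M A t q (nx P)" using fml by blast
qed


definition chooser :: "('a, 's, 'act, 'p, 'l) mvcgs \<Rightarrow> ('s \<Rightarrow> ('a \<Rightarrow> 'act) \<Rightarrow> bool) \<Rightarrow> 'a \<Rightarrow> 's \<Rightarrow> 'act" where
  "chooser M good a q = (if \<exists>\<sigma>. good q \<sigma> then (SOME \<sigma>. good q \<sigma>) a else SOME x. x \<in> avail M a q)"

lemma chooser_good: "good q \<sigma> \<Longrightarrow> good q (\<lambda>a. chooser M good a q)"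
proof -
  assume g: "good q \<sigma>"
  have e: "\<exists>\<sigma>. good q \<sigma>" using g by blast
  have "(\<lambda>a. chooser M good a q) = (SOME \<sigma>. good q \<sigma>)" unfolding chooser_def if_P[OF e] by simp
  then show ?thesis using someI[of "good q", OF g] by simp
qed

lemma chooser_ml:
  assumes wf: "wf_mvcgs M" and gav: "\<And>q \<sigma> a. good q \<sigma> \<Longrightarrow> a \<in> A \<Longrightarrow> \<sigma> a \<in> avail M a q"
  shows "(\<lambda>a h. chooser M good a (last h)) \<in> ml_strats M A"
  unfolding ml_strats_def mem_Collect_eq
proof (intro exI conjI)
  show "\<forall>a\<in>A. \<forall>q. chooser M good a q \<in> avail M a q"
  proof (intro ballI allI)
    fix a q assume a: "a \<in> A"
    show "chooser M good a q \<in> avail M a q"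
    proof (cases "\<exists>\<sigma>. good q \<sigma>")
      case True
      then obtain \<sigma> where "good q \<sigma>" by blast
      then have "good q (\<lambda>a. chooser M good a q)" by (rule chooser_good)
      then show ?thesis using gav a by blast
    next
      case False
      have "avail M a q \<noteq> {}" using wf unfolding wf_mvcgs_def by blast
      then show ?thesis unfolding chooser_def if_not_P[OF False] by (simp add: some_in_eq)
    qed
  qed
qed simp

lemma win_mono: "win M A t q O1 \<Longrightarrow> (\<And>\<rho>. O1 \<rho> \<Longrightarrow> O2 \<rho>) \<Longrightarrow> win M A t q O2"
  unfolding win_def by blast

lemma Zstep:
  assumes wf: "wf_mvcgs M" and cons: "\<And>q \<rho>. Ob (case_nat q \<rho>) \<longleftrightarrow> P2 q \<or> (P1 q \<and> Ob \<rho>)"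
    and t: "t \<in> pr_strats M A" and w: "win M A t q Ob" and np: "\<not> P2 q"
  shows "P1 q" "\<forall>a\<in>A. t a [q] \<in> avail M a q"
    "\<And>\<alpha>. \<forall>a. \<alpha> a \<in> avail M a q \<Longrightarrow> \<forall>a\<in>A. \<alpha> a = t a [q] \<Longrightarrow> win M A (resid t q) (trans M q \<alpha>) Ob"
proof -
  obtain \<rho> where r: "\<rho> \<in> outcomes M A q t" using outcomes_nonempty[OF wf t] by blast
  have r0: "\<rho> 0 = q" using r unfolding outcomes_def by blast
  have "Ob \<rho>" using r w unfolding win_def by blast
  then have "Ob (case_nat q (\<lambda>i. \<rho> (Suc i)))" using case_nat_split[of \<rho>] r0 by simp
  then show "P1 q" using cons np by blast
  show "\<forall>a\<in>A. t a [q] \<in> avail M a q"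
  proof
    fix a assume a: "a \<in> A"
    have "t a [q] \<in> avail M a (last [q])" using t a unfolding pr_strats_def by blast
    then show "t a [q] \<in> avail M a q" by simp
  qed
  fix \<alpha> assume "\<forall>a. \<alpha> a \<in> avail M a q" "\<forall>a\<in>A. \<alpha> a = t a [q]"
  from win_step[OF w this] have w2: "win M A (resid t q) (trans M q \<alpha>) (\<lambda>\<rho>'. Ob (case_nat q \<rho>'))" .
  show "win M A (resid t q) (trans M q \<alpha>) Ob"
  proof (rule win_mono[OF w2])
    fix \<rho> assume "Ob (case_nat q \<rho>)" then show "Ob \<rho>" using cons[of q \<rho>] np by blast
  qed
qed

lemma MLwk:
  assumes wf: "wf_mvcgs M"
  shows "MLP M A (wkun P1 P2)"
  unfolding MLP_def
proof (intro allI impI)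
  fix q0 assume "\<exists>t\<in>pr_strats M A. win M A t q0 (wkun P1 P2)"
  define Z where "Z = {q. \<exists>t\<in>pr_strats M A. win M A t q (wkun P1 P2)}"
  have q0: "q0 \<in> Z" unfolding Z_def using \<open>\<exists>t\<in>pr_strats M A. win M A t q0 (wkun P1 P2)\<close> by simp
  define good where "good q \<sigma> \<longleftrightarrow> (\<forall>a\<in>A. \<sigma> a \<in> avail M a q) \<and>
      (\<forall>\<alpha>. (\<forall>a. \<alpha> a \<in> avail M a q) \<and> (\<forall>a\<in>A. \<alpha> a = \<sigma> a) \<longrightarrow> trans M q \<alpha> \<in> Z)" for q \<sigma>
  have Zg: "P1 q \<and> (\<exists>\<sigma>. good q \<sigma>)" if qZ: "q \<in> Z" and np: "\<not> P2 q" for q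
  proof -
    obtain t where t: "t \<in> pr_strats M A" and w: "win M A t q (wkun P1 P2)" using qZ unfolding Z_def by blast
    note zs = Zstep[of M "wkun P1 P2" P2 P1, OF wf wkun_cons t w np]
    have "good q (\<lambda>a. t a [q])" unfolding good_def
    proof (intro conjI allI impI)
      show "\<forall>a\<in>A. t a [q] \<in> avail M a q" using zs(2) by simp
      fix \<alpha> assume h: "(\<forall>a. \<alpha> a \<in> avail M a q) \<and> (\<forall>a\<in>A. \<alpha> a = t a [q])"
      have "win M A (resid t q) (trans M q \<alpha>) (wkun P1 P2)" using zs(3) h by blast
      then show "trans M q \<alpha> \<in> Z" using resid_pr[OF t] unfolding Z_def by blast
    qed
    then show ?thesis using zs(1) by blast
  qed
  define s where "s = (\<lambda>a h. chooser M good a (last h))"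
  have sml: "s \<in> ml_strats M A" unfolding s_def
    by (rule chooser_ml[OF wf]) (auto simp: good_def)
  have "win M A s q0 (wkun P1 P2)"
    unfolding win_def
  proof
    fix \<rho> assume "\<rho> \<in> outcomes M A q0 s"
    then have o: "\<rho> 0 = q0" "\<forall>i. \<exists>\<alpha>. (\<forall>a. \<alpha> a \<in> avail M a (\<rho> i)) \<and> (\<forall>a\<in>A. \<alpha> a = chooser M good a (\<rho> i)) \<and> \<rho> (Suc i) = trans M (\<rho> i) \<alpha>"
      unfolding outcomes_ml s_def by blast+
    have Zi: "(\<forall>k<i. \<not> P2 (\<rho> k)) \<longrightarrow> \<rho> i \<in> Z" for i
    proof (induction i)
      case 0 then show ?case using o(1) q0 by simp
    next
      case (Suc i)
      show ?case
      proof
        assume h: "\<forall>k<Suc i. \<not> P2 (\<rho> k)"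
        then have z: "\<rho> i \<in> Z" using Suc by simp
        have "\<not> P2 (\<rho> i)" using h by simp
        then obtain \<sigma> where "good (\<rho> i) \<sigma>" using Zg z by blast
        then have g: "good (\<rho> i) (\<lambda>a. chooser M good a (\<rho> i))" by (rule chooser_good)
        obtain \<alpha> where "\<forall>a. \<alpha> a \<in> avail M a (\<rho> i)" "\<forall>a\<in>A. \<alpha> a = chooser M good a (\<rho> i)" "\<rho> (Suc i) = trans M (\<rho> i) \<alpha>"
          using o(2) by blast
        then show "\<rho> (Suc i) \<in> Z" using g unfolding good_def by auto
      qed
    qed
    show "wkun P1 P2 \<rho>"
    proof (cases "\<exists>i. P2 (\<rho> i)")
      case True
      then obtain i where i: "P2 (\<rho> i)" "\<forall>k<i. \<not> P2 (\<rho> k)" using exists_least_iff[of "\<lambda>i. P2 (\<rho> i)"] by blast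
      have "P1 (\<rho> k)" if "k < i" for k
      proof -
        have "\<rho> k \<in> Z" using Zi[of k] i(2) that by auto
        then show ?thesis using Zg i(2) that by blast
      qed
      then show ?thesis using i unfolding wkun_def untl_def by blast
    next
      case False
      then have "P1 (\<rho> i)" for i using Zi[of i] Zg by blast
      then show ?thesis unfolding wkun_def by blast
    qed
  qed
  then show "\<exists>t\<in>ml_strats M A. win M A t q0 (wkun P1 P2)" using sml by blast
qed


primrec attr :: "('a, 's, 'act, 'p, 'l) mvcgs \<Rightarrow> 'a set \<Rightarrow> ('s \<Rightarrow> bool) \<Rightarrow> ('s \<Rightarrow> bool) \<Rightarrow> nat \<Rightarrow> 's set" where
  "attr M A P1 P2 0 = {q. P2 q}"
| "attr M A P1 P2 (Suc n) = attr M A P1 P2 n \<union> {q. P1 q \<and> (\<exists>\<sigma>. (\<forall>a\<in>A. \<sigma> a \<in> avail M a q) \<and>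
      (\<forall>\<alpha>. (\<forall>a. \<alpha> a \<in> avail M a q) \<and> (\<forall>a\<in>A. \<alpha> a = \<sigma> a) \<longrightarrow> trans M q \<alpha> \<in> attr M A P1 P2 n))}"

lemma attr_mono: "m \<le> n \<Longrightarrow> attr M A P1 P2 m \<subseteq> attr M A P1 P2 n"
  by (rule lift_Suc_mono_le[where f="attr M A P1 P2"]) auto

lemma fin_bound:
  fixes F :: "nat \<Rightarrow> 'x set"
  assumes "finite S" "\<And>m n. m \<le> n \<Longrightarrow> F m \<subseteq> F n" "\<forall>x\<in>S. \<exists>n. x \<in> F n"
  shows "\<exists>N. \<forall>x\<in>S. x \<in> F N"
  using assms(1,3)
proof (induction S rule: finite_induct)
  case empty then show ?case by simp
next
  case (insert x S)
  then obtain N where N: "\<forall>y\<in>S. y \<in> F N" by blast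
  obtain n where n: "x \<in> F n" using insert by blast
  have "\<forall>y\<in>insert x S. y \<in> F (max N n)"
  proof -
    have a1: "F N \<subseteq> F (max N n)" by (rule assms(2)) simp
    have a2: "F n \<subseteq> F (max N n)" by (rule assms(2)) simp
    note a = a1 a2
    show ?thesis using N n a by blast
  qed
  then show ?case by blast
qed

lemma MLuntl:
  fixes M :: "('a, 's::finite, 'act, 'p, 'l) mvcgs"
  assumes wf: "wf_mvcgs M"
  shows "MLP M A (untl P1 P2)"
  unfolding MLP_def
proof (intro allI impI)
  fix q0 assume "\<exists>t\<in>pr_strats M A. win M A t q0 (untl P1 P2)"
  then obtain t0 where t0: "t0 \<in> pr_strats M A" "win M A t0 q0 (untl P1 P2)" by blast
  let ?at = "attr M A P1 P2"
  have inA: "\<exists>n. q0 \<in> ?at n"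
  proof (rule ccontr)
    assume nA: "\<not> (\<exists>n. q0 \<in> ?at n)"
    define R where "R q t \<longleftrightarrow> t \<in> pr_strats M A \<and> win M A t q (untl P1 P2) \<and> (\<forall>n. q \<notin> ?at n)" for q t
    have step: "\<exists>\<alpha>. (\<forall>a. \<alpha> a \<in> avail M a q) \<and> (\<forall>a\<in>A. \<alpha> a = t a [q]) \<and> R (trans M q \<alpha>) (resid t q)"
      if Rqt: "R q t" for q t
    proof -
      have t: "t \<in> pr_strats M A" and w: "win M A t q (untl P1 P2)" and nq: "\<forall>n. q \<notin> ?at n"
        using Rqt unfolding R_def by auto
      have np: "\<not> P2 q" using nq[rule_format, of 0] by simp
      note zs = Zstep[of M "untl P1 P2" P2 P1, OF wf untl_cons t w np]
      define S where "S = {\<alpha>. (\<forall>a. \<alpha> a \<in> avail M a q) \<and> (\<forall>a\<in>A. \<alpha> a = t a [q])}"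
      show ?thesis
      proof (rule ccontr)
        assume nt: "\<not> (\<exists>\<alpha>. (\<forall>a. \<alpha> a \<in> avail M a q) \<and> (\<forall>a\<in>A. \<alpha> a = t a [q]) \<and> R (trans M q \<alpha>) (resid t q))"
        have all: "\<forall>\<alpha>\<in>S. \<exists>n. trans M q \<alpha> \<in> ?at n"
        proof
          fix \<alpha> assume aS: "\<alpha> \<in> S"
          have av: "\<forall>a. \<alpha> a \<in> avail M a q" and ag: "\<forall>a\<in>A. \<alpha> a = t a [q]" using aS unfolding S_def by auto
          have wa: "win M A (resid t q) (trans M q \<alpha>) (untl P1 P2)" by (rule zs(3)[OF av ag])
          show "\<exists>n. trans M q \<alpha> \<in> ?at n"
          proof (rule ccontr)
            assume "\<not> (\<exists>n. trans M q \<alpha> \<in> ?at n)"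
            then have "R (trans M q \<alpha>) (resid t q)" unfolding R_def using resid_pr[OF t] wa by blast
            then show False using nt av ag by blast
          qed
        qed
        have "\<forall>x\<in>trans M q ` S. \<exists>n. x \<in> ?at n" using all by blast
        moreover have fin: "finite (trans M q ` S)" by simp
        ultimately obtain N where N: "\<forall>x\<in>trans M q ` S. x \<in> ?at N"
          using fin_bound[of "trans M q ` S" ?at, OF fin attr_mono] by blast
        have c: "(\<forall>a\<in>A. t a [q] \<in> avail M a q) \<and>
              (\<forall>\<alpha>. (\<forall>a. \<alpha> a \<in> avail M a q) \<and> (\<forall>a\<in>A. \<alpha> a = t a [q]) \<longrightarrow> trans M q \<alpha> \<in> ?at N)"
        proof (intro conjI allI impI)
          show "\<forall>a\<in>A. t a [q] \<in> avail M a q" by (rule zs(2))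
          fix \<alpha> assume "(\<forall>a. \<alpha> a \<in> avail M a q) \<and> (\<forall>a\<in>A. \<alpha> a = t a [q])"
          then have "\<alpha> \<in> S" unfolding S_def by blast
          then show "trans M q \<alpha> \<in> ?at N" using N by blast
        qed
        have "q \<in> ?at (Suc N)"
          unfolding attr.simps(2)
          by (rule UnI2, rule CollectI, rule conjI[OF zs(1)], rule exI[of _ "\<lambda>a. t a [q]"]) (rule c)
        then show False using nq by blast
      qed
    qed
    have "R q0 t0" unfolding R_def using t0 nA by blast
    from path_exists[where R=R, OF this step]
    obtain \<rho> where r: "\<rho> \<in> outcomes M A q0 t0" and ri: "\<forall>i. \<exists>t. R (\<rho> i) t" by blast
    have "untl P1 P2 \<rho>" using r t0(2) unfolding win_def by blast
    then obtain i where "P2 (\<rho> i)" unfolding untl_def by blast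
    moreover obtain t where "R (\<rho> i) t" using ri by blast
    ultimately have "P2 (\<rho> i)" "\<rho> i \<notin> ?at 0" unfolding R_def by blast+
    then show False by simp
  qed
  define rk where "rk q = (LEAST n. q \<in> ?at n)" for q
  define good where "good q \<sigma> \<longleftrightarrow> (\<forall>a\<in>A. \<sigma> a \<in> avail M a q) \<and>
      (\<forall>\<alpha>. (\<forall>a. \<alpha> a \<in> avail M a q) \<and> (\<forall>a\<in>A. \<alpha> a = \<sigma> a) \<longrightarrow> trans M q \<alpha> \<in> ?at (rk q - 1))" for q \<sigma>
  define s where "s = (\<lambda>a h. chooser M good a (last h))"
  have sml: "s \<in> ml_strats M A" unfolding s_def
    by (rule chooser_ml[OF wf]) (auto simp: good_def)
  have main: "\<forall>q \<rho>. q \<in> ?at n \<longrightarrow> \<rho> \<in> outcomes M A q s \<longrightarrow> untl P1 P2 \<rho>" for n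
  proof (induction n rule: less_induct)
    case (less n)
    show ?case
    proof (intro allI impI)
      fix q \<rho> assume qn: "q \<in> ?at n" and r: "\<rho> \<in> outcomes M A q s"
      then have o: "\<rho> 0 = q" "\<forall>i. \<exists>\<alpha>. (\<forall>a. \<alpha> a \<in> avail M a (\<rho> i)) \<and> (\<forall>a\<in>A. \<alpha> a = chooser M good a (\<rho> i)) \<and> \<rho> (Suc i) = trans M (\<rho> i) \<alpha>"
        unfolding outcomes_ml s_def by blast+
      show "untl P1 P2 \<rho>"
      proof (cases "P2 q")
        case True
        then show ?thesis unfolding untl_def using o(1) by (intro exI[of _ 0]) simp
      next
        case False
        have rq: "q \<in> ?at (rk q)" unfolding rk_def using qn by (rule LeastI)
        have rn: "rk q \<le> n" unfolding rk_def using qn by (rule Least_le)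
        have "rk q \<noteq> 0"
        proof
          assume "rk q = 0"
          then have "q \<in> ?at 0" using rq by simp
          then show False using False by simp
        qed
        then obtain m where m: "rk q = Suc m" using not0_implies_Suc by blast
        have nm: "q \<notin> ?at m" using not_less_Least[of m "\<lambda>n. q \<in> ?at n"] m unfolding rk_def by simp
        have "q \<in> ?at (Suc m)" using rq m by simp
        then have qs: "q \<in> {q. P1 q \<and> (\<exists>\<sigma>. (\<forall>a\<in>A. \<sigma> a \<in> avail M a q) \<and>
              (\<forall>\<alpha>. (\<forall>a. \<alpha> a \<in> avail M a q) \<and> (\<forall>a\<in>A. \<alpha> a = \<sigma> a) \<longrightarrow> trans M q \<alpha> \<in> ?at m))}"
          using nm unfolding attr.simps(2) by blast
        have m1: "rk q - 1 = m" using m by simp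
        from qs obtain \<sigma> where p1: "P1 q" and gs: "good q \<sigma>" unfolding good_def m1 by blast
        have g: "good q (\<lambda>a. chooser M good a q)" by (rule chooser_good[where good=good and q=q, OF gs])
        obtain \<alpha> where \<alpha>: "\<forall>a. \<alpha> a \<in> avail M a q" "\<forall>a\<in>A. \<alpha> a = chooser M good a q" "\<rho> (Suc 0) = trans M q \<alpha>"
          using o(2)[rule_format, of 0] o(1) by auto
        have "trans M q \<alpha> \<in> ?at m" using g \<alpha>(1,2) unfolding good_def m1 by blast
        then have r1: "\<rho> 1 \<in> ?at m" using \<alpha>(3) by simp
        have r': "(\<lambda>i. \<rho> (Suc i)) \<in> outcomes M A (\<rho> 1) s"
          unfolding s_def outcomes_ml
        proof (intro conjI allI)
          show "\<rho> (Suc 0) = \<rho> 1" by simp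
          fix i
          show "\<exists>\<alpha>. (\<forall>a. \<alpha> a \<in> avail M a (\<rho> (Suc i))) \<and> (\<forall>a\<in>A. \<alpha> a = chooser M good a (\<rho> (Suc i))) \<and>
              \<rho> (Suc (Suc i)) = trans M (\<rho> (Suc i)) \<alpha>"
            using o(2)[rule_format, of "Suc i"] by blast
        qed
        have mn: "m < n" using rn m by simp
        have "untl P1 P2 (\<lambda>i. \<rho> (Suc i))" by (rule less[OF mn, rule_format, OF r1 r'])
        then have "untl P1 P2 (case_nat q (\<lambda>i. \<rho> (Suc i)))" unfolding untl_cons using p1 by blast
        then show ?thesis using case_nat_split[of \<rho>] o(1) by simp
      qed
    qed
  qed
  have "win M A s q0 (untl P1 P2)" using main inA unfolding win_def by blast
  then show "\<exists>t\<in>ml_strats M A. win M A t q0 (untl P1 P2)" using sml by blast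
qed


section \<open>Connecting the lattice semantics to the games\<close>

lemma jp_coop:
  assumes "jp j"
  shows "j \<le> coop M pr A \<gamma> q \<longleftrightarrow> (\<exists>s\<in>strats M pr A. win M A s q (\<lambda>\<rho>. j \<le> \<gamma> \<rho>))"
proof
  assume "j \<le> coop M pr A \<gamma> q"
  then obtain s where "s \<in> strats M pr A" "j \<le> (INF \<rho>\<in>outcomes M A q s. \<gamma> \<rho>)"
    unfolding coop_def using jp_SUP[OF assms] by blast
  then show "\<exists>s\<in>strats M pr A. win M A s q (\<lambda>\<rho>. j \<le> \<gamma> \<rho>)"
    unfolding win_def le_INF_iff by blast
next
  assume "\<exists>s\<in>strats M pr A. win M A s q (\<lambda>\<rho>. j \<le> \<gamma> \<rho>)"
  then obtain s where s: "s \<in> strats M pr A" "j \<le> (INF \<rho>\<in>outcomes M A q s. \<gamma> \<rho>)"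
    unfolding win_def le_INF_iff by blast
  then show "j \<le> coop M pr A \<gamma> q" unfolding coop_def by (meson SUP_upper2)
qed

lemma jp_dual:
  assumes "jp j"
  shows "j \<le> dual M pr A \<gamma> q \<longleftrightarrow> \<not> (\<exists>s\<in>strats M pr A. win M A s q (\<lambda>\<rho>. \<not> j \<le> \<gamma> \<rho>))"
proof -
  have "j \<le> (SUP \<rho>\<in>outcomes M A q s. \<gamma> \<rho>) \<longleftrightarrow> (\<exists>\<rho>\<in>outcomes M A q s. j \<le> \<gamma> \<rho>)" for s
    using jp_SUP[OF assms, of "\<gamma>" "outcomes M A q s"] by (meson SUP_upper2)
  then show ?thesis unfolding dual_def le_INF_iff win_def by blast
qed

lemma coop_eq:
  fixes M :: "('a, 's, 'act, 'p, 'l::finite_distrib_lattice_complete) mvcgs"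
  assumes "\<And>j. jp j \<Longrightarrow> MLP M A (\<lambda>\<rho>. j \<le> \<gamma> \<rho>)"
  shows "coop M True A \<gamma> q = coop M False A \<gamma> q"
proof (rule eq_jp)
  fix j :: 'l assume j: "jp j"
  show "j \<le> coop M True A \<gamma> q \<longleftrightarrow> j \<le> coop M False A \<gamma> q"
    unfolding jp_coop[OF j] strats_def if_True if_False using assms[OF j] ml_sub_pr[of M A] unfolding MLP_def by blast
qed

lemma dual_eq:
  fixes M :: "('a, 's, 'act, 'p, 'l::finite_distrib_lattice_complete) mvcgs"
  assumes "\<And>j. jp j \<Longrightarrow> MLP M A (\<lambda>\<rho>. \<not> j \<le> \<gamma> \<rho>)"
  shows "dual M True A \<gamma> q = dual M False A \<gamma> q"
proof (rule eq_jp)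
  fix j :: 'l assume j: "jp j"
  show "j \<le> dual M True A \<gamma> q \<longleftrightarrow> j \<le> dual M False A \<gamma> q"
    unfolding jp_dual[OF j] strats_def if_True if_False using assms[OF j] ml_sub_pr[of M A] unfolding MLP_def by blast
qed

lemma jp_until:
  fixes f1 f2 :: "'s \<Rightarrow> 'l::finite_distrib_lattice_complete"
  assumes "jp j"
  shows "j \<le> path_until f1 f2 \<rho> \<longleftrightarrow> untl (\<lambda>q. j \<le> f1 q) (\<lambda>q. j \<le> f2 q) \<rho>"
proof
  assume "j \<le> path_until f1 f2 \<rho>"
  then obtain i where "j \<le> inf (f2 (\<rho> i)) (INF k\<in>{..<i}. f1 (\<rho> k))"
    unfolding path_until_def using jp_SUP[OF assms] by blast
  then show "untl (\<lambda>q. j \<le> f1 q) (\<lambda>q. j \<le> f2 q) \<rho>"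
    unfolding untl_def le_inf_iff le_INF_iff by auto
next
  assume "untl (\<lambda>q. j \<le> f1 q) (\<lambda>q. j \<le> f2 q) \<rho>"
  then obtain i where "j \<le> inf (f2 (\<rho> i)) (INF k\<in>{..<i}. f1 (\<rho> k))"
    unfolding untl_def le_inf_iff le_INF_iff by auto
  then show "j \<le> path_until f1 f2 \<rho>" unfolding path_until_def by (meson SUP_upper2 UNIV_I)
qed

lemma jp_weak:
  fixes f1 f2 :: "'s \<Rightarrow> 'l::finite_distrib_lattice_complete"
  assumes "jp j"
  shows "j \<le> path_weak f1 f2 \<rho> \<longleftrightarrow> wkun (\<lambda>q. j \<le> f1 q) (\<lambda>q. j \<le> f2 q) \<rho>"
proof -
  have "j \<le> path_weak f1 f2 \<rho> \<longleftrightarrow> j \<le> path_until f1 f2 \<rho> \<or> j \<le> (INF i. f1 (\<rho> i))"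
    unfolding path_weak_def using assms unfolding jp_def by (meson le_supI1 le_supI2)
  then show ?thesis unfolding wkun_def jp_until[OF assms] le_INF_iff by simp
qed

lemma jp_next: "j \<le> path_next f \<rho> \<longleftrightarrow> nx (\<lambda>q. j \<le> f q) \<rho>"
  unfolding path_next_def nx_def by simp

lemma not_untl: "\<not> untl P1 P2 \<rho> \<longleftrightarrow> wkun (\<lambda>q. \<not> P2 q) (\<lambda>q. \<not> P1 q \<and> \<not> P2 q) \<rho>"
proof
  assume nu: "\<not> untl P1 P2 \<rho>"
  show "wkun (\<lambda>q. \<not> P2 q) (\<lambda>q. \<not> P1 q \<and> \<not> P2 q) \<rho>"
  proof (cases "\<exists>i. P2 (\<rho> i)")
    case True
    then obtain i where i: "P2 (\<rho> i)" "\<forall>k<i. \<not> P2 (\<rho> k)" using exists_least_iff[of "\<lambda>i. P2 (\<rho> i)"] by blast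
    then obtain k where k: "k < i" "\<not> P1 (\<rho> k)" using nu unfolding untl_def by blast
    have "untl (\<lambda>q. \<not> P2 q) (\<lambda>q. \<not> P1 q \<and> \<not> P2 q) \<rho>"
      unfolding untl_def using i k by (intro exI[of _ k]) auto
    then show ?thesis unfolding wkun_def by blast
  next
    case False then show ?thesis unfolding wkun_def by blast
  qed
next
  assume w: "wkun (\<lambda>q. \<not> P2 q) (\<lambda>q. \<not> P1 q \<and> \<not> P2 q) \<rho>"
  show "\<not> untl P1 P2 \<rho>"
  proof
    assume "untl P1 P2 \<rho>"
    then obtain i where i: "P2 (\<rho> i)" "\<forall>k<i. P1 (\<rho> k)" unfolding untl_def by blast
    from w show False unfolding wkun_def
    proof
      assume "untl (\<lambda>q. \<not> P2 q) (\<lambda>q. \<not> P1 q \<and> \<not> P2 q) \<rho>"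
      then obtain i' where i': "\<not> P1 (\<rho> i')" "\<not> P2 (\<rho> i')" "\<forall>k<i'. \<not> P2 (\<rho> k)" unfolding untl_def by blast
      show False
      proof (cases i i' rule: linorder_cases)
        case less then show ?thesis using i i' by blast
      next
        case equal then show ?thesis using i i' by blast
      next
        case greater then show ?thesis using i i' by blast
      qed
    next
      assume "\<forall>k. \<not> P2 (\<rho> k)" then show False using i by blast
    qed
  qed
qed

lemma not_wkun: "\<not> wkun P1 P2 \<rho> \<longleftrightarrow> untl (\<lambda>q. \<not> P2 q) (\<lambda>q. \<not> P1 q \<and> \<not> P2 q) \<rho>"
proof
  assume nw: "\<not> wkun P1 P2 \<rho>"
  then have nu: "\<not> untl P1 P2 \<rho>" and "\<exists>i. \<not> P1 (\<rho> i)" unfolding wkun_def by auto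
  then obtain i where i: "\<not> P1 (\<rho> i)" "\<forall>k<i. P1 (\<rho> k)" using exists_least_iff[of "\<lambda>i. \<not> P1 (\<rho> i)"] by blast
  have np: "\<not> P2 (\<rho> k)" if "k \<le> i" for k
  proof
    assume "P2 (\<rho> k)"
    then have "untl P1 P2 \<rho>" unfolding untl_def using i(2) that by (intro exI[of _ k]) auto
    then show False using nu by blast
  qed
  show "untl (\<lambda>q. \<not> P2 q) (\<lambda>q. \<not> P1 q \<and> \<not> P2 q) \<rho>"
    unfolding untl_def using i np by (intro exI[of _ i]) auto
next
  assume "untl (\<lambda>q. \<not> P2 q) (\<lambda>q. \<not> P1 q \<and> \<not> P2 q) \<rho>"
  then obtain i where i: "\<not> P1 (\<rho> i)" "\<not> P2 (\<rho> i)" "\<forall>k<i. \<not> P2 (\<rho> k)" unfolding untl_def by blast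
  show "\<not> wkun P1 P2 \<rho>" unfolding wkun_def
  proof
    assume "untl P1 P2 \<rho> \<or> (\<forall>i. P1 (\<rho> i))"
    then show False
    proof
      assume "untl P1 P2 \<rho>"
      then obtain i' where i': "P2 (\<rho> i')" "\<forall>k<i'. P1 (\<rho> k)" unfolding untl_def by blast
      show False
      proof (cases i i' rule: linorder_cases)
        case less then show ?thesis using i i' by blast
      next
        case equal then show ?thesis using i i' by blast
      next
        case greater then show ?thesis using i i' by blast
      qed
    next
      assume "\<forall>i. P1 (\<rho> i)" then show False using i by blast
    qed
  qed
qed


context
  fixes M :: "('a, 's::finite, 'act, 'p, 'l::finite_distrib_lattice_complete) mvcgs"
  assumes wf: "wf_mvcgs M"
begin

lemma coop_next_eq: "coop M True A (path_next f) q = coop M False A (path_next f) q"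
proof (rule coop_eq)
  fix j :: 'l
  have "(\<lambda>\<rho>. j \<le> path_next f \<rho>) = nx (\<lambda>q. j \<le> f q)" by (rule ext) (rule jp_next)
  then show "MLP M A (\<lambda>\<rho>. j \<le> path_next f \<rho>)" using MLnx[OF wf] by simp
qed

lemma dual_next_eq: "dual M True A (path_next f) q = dual M False A (path_next f) q"
proof (rule dual_eq)
  fix j :: 'l
  have "(\<lambda>\<rho>. \<not> j \<le> path_next f \<rho>) = nx (\<lambda>q. \<not> j \<le> f q)" by (rule ext) (simp add: jp_next nx_def)
  then show "MLP M A (\<lambda>\<rho>. \<not> j \<le> path_next f \<rho>)" using MLnx[OF wf] by simp
qed

lemma coop_until_eq: "coop M True A (path_until f1 f2) q = coop M False A (path_until f1 f2) q"
proof (rule coop_eq)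
  fix j :: 'l assume j: "jp j"
  have "(\<lambda>\<rho>. j \<le> path_until f1 f2 \<rho>) = untl (\<lambda>q. j \<le> f1 q) (\<lambda>q. j \<le> f2 q)" by (rule ext) (rule jp_until[OF j])
  then show "MLP M A (\<lambda>\<rho>. j \<le> path_until f1 f2 \<rho>)" using MLuntl[OF wf] by simp
qed

lemma dual_until_eq: "dual M True A (path_until f1 f2) q = dual M False A (path_until f1 f2) q"
proof (rule dual_eq)
  fix j :: 'l assume j: "jp j"
  have "(\<lambda>\<rho>. \<not> j \<le> path_until f1 f2 \<rho>) = wkun (\<lambda>q. \<not> j \<le> f2 q) (\<lambda>q. \<not> j \<le> f1 q \<and> \<not> j \<le> f2 q)"
    by (rule ext) (simp only: jp_until[OF j] not_untl)
  then show "MLP M A (\<lambda>\<rho>. \<not> j \<le> path_until f1 f2 \<rho>)" using MLwk[OF wf] by simp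
qed

lemma coop_weak_eq: "coop M True A (path_weak f1 f2) q = coop M False A (path_weak f1 f2) q"
proof (rule coop_eq)
  fix j :: 'l assume j: "jp j"
  have "(\<lambda>\<rho>. j \<le> path_weak f1 f2 \<rho>) = wkun (\<lambda>q. j \<le> f1 q) (\<lambda>q. j \<le> f2 q)" by (rule ext) (rule jp_weak[OF j])
  then show "MLP M A (\<lambda>\<rho>. j \<le> path_weak f1 f2 \<rho>)" using MLwk[OF wf] by simp
qed

lemma dual_weak_eq: "dual M True A (path_weak f1 f2) q = dual M False A (path_weak f1 f2) q"
proof (rule dual_eq)
  fix j :: 'l assume j: "jp j"
  have "(\<lambda>\<rho>. \<not> j \<le> path_weak f1 f2 \<rho>) = untl (\<lambda>q. \<not> j \<le> f2 q) (\<lambda>q. \<not> j \<le> f1 q \<and> \<not> j \<le> f2 q)"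
    by (rule ext) (simp only: jp_weak[OF j] not_wkun)
  then show "MLP M A (\<lambda>\<rho>. \<not> j \<le> path_weak f1 f2 \<rho>)" using MLuntl[OF wf] by simp
qed

lemma sem_eq: "sem M True \<phi> = sem M False \<phi>"
  by (induction \<phi>) (rule ext, simp add: coop_next_eq dual_next_eq coop_until_eq dual_until_eq coop_weak_eq dual_weak_eq)+

end

theorem theorem5p19:
  fixes M :: "('a::finite, 's::finite, 'act::finite, 'p::finite, 'l::finite_distrib_lattice_complete) mvcgs"
  assumes "wf_mvcgs M"
  shows "sem M True \<phi> q = sem M False \<phi> q"
  using sem_eq[OF assms] by simp

end
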